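(* Let $F$ be a field of characteristic zero and $n,m$ natural numbers. The set of elements $l\in W(n,m)$ such that every standard basis element $b=e^{\alpha}x^{\beta}\partial_k$ of $W(n,m)$ is an eigenvector of $\mathrm{ad}\,l$ (i.e. $[b,l]\in Fb$ for all such $b$) is exactly the $m$-dimensional subspace spanned by $\{x_t\partial_t: n+1\le t\le n+m\}$; this is a maximal torus of $W(n,m)$ with respect to the standard basis.
   Context: Let $A_{n,m}$ be the commutative $F$-algebra with $F$-basis the symbols $e^{\alpha}x^{\beta}=e^{a_1x_1}\cdots e^{a_nx_n}x_1^{b_1}\cdots x_{n+m}^{b_{n+m}}$, $\alpha\in\mathbb Z^n$, $\beta\in\mathbb Z^{n+m}$, with multiplication $e^{\alpha}x^{\beta}\cdot e^{\gamma}x^{\delta}=e^{\alpha+\gamma}x^{\beta+\delta}$. For $1\le i\le n+m$, $\partial_i(e^{\alpha}x^{\beta})=a_i e^{\alpha}x^{\beta}+b_i e^{\alpha}x^{\beta-\epsilon_i}$, where $a_i:=0$ for $i>n$. $W(n,m)$ is the Lie algebra with standard basis $\{e^{\alpha}x^{\beta}\partial_i\}$ and bracket $[f\partial_i,g\partial_j]=f\partial_i(g)\partial_j-g\partial_j(f)\partial_i$. Here $x_t\partial_t$ denotes $x^{\epsilon_t}\partial_t$. *)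

theory Defs
  imports Main
begin

text \<open>Indices are 0-based: alpha :: nat => int with alpha t = 0 for t >= n
(exponents of e^{x_1},...,e^{x_n}), beta :: nat => int with beta t = 0 for
t >= n+m (exponents of x_1,...,x_{n+m}), and k < n+m (the derivation index).
The triple (alpha, beta, k) names the standard basis element e^alpha x^beta d_k.\<close>

type_synonym widx = "(nat \<Rightarrow> int) \<times> (nat \<Rightarrow> int) \<times> nat"

definition valid_idx :: "nat \<Rightarrow> nat \<Rightarrow> widx \<Rightarrow> bool" where
  "valid_idx n m i = (case i of (\<alpha>, \<beta>, k) \<Rightarrow>
      (\<forall>t\<ge>n. \<alpha> t = 0) \<and> (\<forall>t\<ge>n+m. \<beta> t = 0) \<and> k < n + m)"

definition Wnm :: "nat \<Rightarrow> nat \<Rightarrow> (widx \<Rightarrow> 'a::field_char_0) set" where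
  "Wnm n m = {f. finite {i. f i \<noteq> 0} \<and> (\<forall>i. f i \<noteq> 0 \<longrightarrow> valid_idx n m i)}"

definition wbasis :: "widx \<Rightarrow> widx \<Rightarrow> 'a::field_char_0" where
  "wbasis i = (\<lambda>r. if r = i then 1 else 0)"

definition unitv :: "nat \<Rightarrow> nat \<Rightarrow> int" where
  "unitv i = (\<lambda>t. if t = i then 1 else 0)"

text \<open>Bracket of basis elements:
 [e^a x^b d_i, e^c x^d d_j] = e^a x^b d_i(e^c x^d) d_j - e^c x^d d_j(e^a x^b) d_i,
 with d_i(e^c x^d) = c_i e^c x^d + d_i e^c x^{d - eps_i}, c_i := 0 for i >= n.\<close>
definition brb :: "nat \<Rightarrow> widx \<Rightarrow> widx \<Rightarrow> widx \<Rightarrow> 'a::field_char_0" where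
  "brb n I J r = (case I of (\<alpha>, \<beta>, i) \<Rightarrow> case J of (\<gamma>, \<delta>, j) \<Rightarrow>
     let s = (\<lambda>t. \<alpha> t + \<gamma> t); p = (\<lambda>t. \<beta> t + \<delta> t) in
       of_int (if i < n then \<gamma> i else 0) * (if r = (s, p, j) then 1 else 0)
     + of_int (\<delta> i) * (if r = (s, (\<lambda>t. p t - unitv i t), j) then 1 else 0)
     - of_int (if j < n then \<alpha> j else 0) * (if r = (s, p, i) then 1 else 0)
     - of_int (\<beta> j) * (if r = (s, (\<lambda>t. p t - unitv j t), i) then 1 else 0))"

definition wbr :: "nat \<Rightarrow> (widx \<Rightarrow> 'a::field_char_0) \<Rightarrow> (widx \<Rightarrow> 'a) \<Rightarrow> widx \<Rightarrow> 'a" where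
  "wbr n f g = (\<lambda>r. \<Sum>I\<in>{i. f i \<noteq> 0}. \<Sum>J\<in>{j. g j \<noteq> 0}. f I * g J * brb n I J r)"

definition xd :: "nat \<Rightarrow> widx" where
  "xd t = ((\<lambda>_. 0), unitv t, t)"

end

theory Submission imports Defs begin

lemma wbr_basis: "wbr n (wbasis b) l r = (\<Sum>J\<in>{j. l j \<noteq> 0}. l J * brb n b J r)"
proof -
  have "{i. (wbasis b i :: 'a) \<noteq> 0} = {b}" by (auto simp: wbasis_def)
  then show ?thesis by (simp add: wbr_def wbasis_def)
qed

lemma key1:
  "brb n ((\<lambda>_. 0), unitv j, j) J' (\<gamma>, \<delta>, j)
   - brb n ((\<lambda>_. 0), (\<lambda>_. 0), j) J' (\<gamma>, (\<lambda>t. \<delta> t - unitv j t), j)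
   = (if J' = (\<gamma>, \<delta>, j) then -1 else (0::'a::field_char_0))"
proof -
  obtain g d k where J: "J' = (g, d, k)" by (cases J') auto
  have e1: "((\<gamma>, \<delta>, j) = (\<lambda>t. 0 + g t, \<lambda>t. unitv j t + d t, k)) =
            ((\<gamma>, (\<lambda>t. \<delta> t - unitv j t), j) = (\<lambda>t. 0 + g t, \<lambda>t. 0 + d t, k))"
    by (auto simp: fun_eq_iff algebra_simps)
  have e2: "((\<gamma>, \<delta>, j) = (\<lambda>t. 0 + g t, \<lambda>t. unitv j t + d t - unitv j t, k)) =
            ((\<gamma>, (\<lambda>t. \<delta> t - unitv j t), j) = (\<lambda>t. 0 + g t, \<lambda>t. 0 + d t - unitv j t, k))"
    by (auto simp: fun_eq_iff algebra_simps)
  have e4: "(of_int (unitv j k) * (if (\<gamma>, \<delta>, j) = (\<lambda>t. 0 + g t, \<lambda>t. unitv j t + d t - unitv k t, j) then 1 else 0) :: 'a)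
      = (if (g, d, k) = (\<gamma>, \<delta>, j) then 1 else 0)"
    by (auto simp: unitv_def fun_eq_iff)
  show ?thesis unfolding J brb_def Let_def
    apply (simp only: prod.case e1 e2 e4)
    apply simp
    done
qed

lemma key2:
  assumes "j < n"
  shows "brb n (unitv j, (\<lambda>_. 0), j) J' (unitv j, unitv j, j)
   - brb n ((\<lambda>_. 0), (\<lambda>_. 0), j) J' ((\<lambda>_. 0), unitv j, j)
   = (if J' = ((\<lambda>_. 0), unitv j, j) then -1 else (0::'a::field_char_0))"
proof -
  obtain g d k where J: "J' = (g, d, k)" by (cases J') auto
  have e1: "((unitv j, unitv j, j) = (\<lambda>t. unitv j t + g t, \<lambda>t. 0 + d t, k)) =
            (((\<lambda>_. 0), unitv j, j) = (\<lambda>t. 0 + g t, \<lambda>t. 0 + d t, k))"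
    by (auto simp: fun_eq_iff algebra_simps)
  have e2: "((unitv j, unitv j, j) = (\<lambda>t. unitv j t + g t, \<lambda>t. 0 + d t - unitv j t, k)) =
            (((\<lambda>_. 0), unitv j, j) = (\<lambda>t. 0 + g t, \<lambda>t. 0 + d t - unitv j t, k))"
    by (auto simp: fun_eq_iff algebra_simps)
  have e3: "(of_int (if k < n then unitv j k else 0) * (if (unitv j, unitv j, j) = (\<lambda>t. unitv j t + g t, \<lambda>t. 0 + d t, j) then 1 else 0) :: 'a)
      = (if (g, d, k) = ((\<lambda>_. 0), unitv j, j) then 1 else 0)"
    using assms by (auto simp: unitv_def fun_eq_iff)
  show ?thesis unfolding J brb_def Let_def
    apply (simp only: prod.case e1 e2 e3)
    apply simp
    done
qed

lemma xd_inj: "xd s = xd t \<longleftrightarrow> s = t"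
  by (auto simp: xd_def)

lemma vanish:
  fixes l :: "widx \<Rightarrow> 'a::field_char_0"
  assumes W: "l \<in> Wnm n m"
    and P: "\<forall>b. valid_idx n m b \<longrightarrow> (\<exists>c::'a. wbr n (wbasis b) l = (\<lambda>r. c * wbasis b r))"
    and v1: "valid_idx n m b1" and v2: "valid_idx n m b2"
    and r1: "r1 \<noteq> b1" and r2: "r2 \<noteq> b2"
    and K: "\<And>J. brb n b2 J r2 - brb n b1 J r1 = (if J = J0 then -1 else (0::'a))"
  shows "l J0 = 0"
proof -
  have fin: "finite {j. l j \<noteq> 0}" using W by (simp add: Wnm_def)
  obtain c1 where c1: "wbr n (wbasis b1) l = (\<lambda>r. c1 * wbasis b1 r)" using P v1 by blast
  obtain c2 where c2: "wbr n (wbasis b2) l = (\<lambda>r. c2 * wbasis b2 r)" using P v2 by blast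
  have z1: "(\<Sum>J\<in>{j. l j \<noteq> 0}. l J * brb n b1 J r1) = 0"
    using fun_cong[OF c1, of r1] r1 unfolding wbr_basis by (simp add: wbasis_def)
  have z2: "(\<Sum>J\<in>{j. l j \<noteq> 0}. l J * brb n b2 J r2) = 0"
    using fun_cong[OF c2, of r2] r2 unfolding wbr_basis by (simp add: wbasis_def)
  have "(\<Sum>J\<in>{j. l j \<noteq> 0}. l J * (brb n b2 J r2 - brb n b1 J r1)) = 0"
    using z1 z2 by (simp add: right_diff_distrib sum_subtractf)
  then have "(\<Sum>J\<in>{j. l j \<noteq> 0}. (if J = J0 then - l J else 0)) = 0"
    by (simp add: K if_distrib cong: if_cong)
  then show ?thesis using fin by (auto simp: sum.delta' split: if_splits)
qed

lemma unitv_ne0: "unitv j \<noteq> (\<lambda>_. 0)"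
  by (auto simp: unitv_def fun_eq_iff)

lemma support:
  fixes l :: "widx \<Rightarrow> 'a::field_char_0"
  assumes W: "l \<in> Wnm n m"
    and P: "\<forall>b. valid_idx n m b \<longrightarrow> (\<exists>c::'a. wbr n (wbasis b) l = (\<lambda>r. c * wbasis b r))"
    and nz: "l J \<noteq> 0"
  shows "\<exists>t\<in>{n..<n+m}. J = xd t"
proof -
  obtain g d j where J: "J = (g, d, j)" by (cases J) auto
  have vJ: "valid_idx n m J" using W nz unfolding Wnm_def by blast
  then have jl: "j < n + m" by (simp add: J valid_idx_def)
  have vb1: "valid_idx n m ((\<lambda>_. 0), (\<lambda>_. 0), j)" using jl by (simp add: valid_idx_def)
  have vb2: "valid_idx n m ((\<lambda>_. 0), unitv j, j)" using jl by (simp add: valid_idx_def unitv_def)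
  have gd: "g = (\<lambda>_. 0) \<and> d = unitv j"
  proof (rule ccontr)
    assume ne: "\<not> (g = (\<lambda>_. 0) \<and> d = unitv j)"
    have "l (g, d, j) = 0"
    proof (rule vanish[OF W P vb1 vb2])
      show "(g, (\<lambda>t. d t - unitv j t), j) \<noteq> ((\<lambda>_. 0), (\<lambda>_. 0), j)"
        using ne by (auto simp: fun_eq_iff)
      show "(g, d, j) \<noteq> ((\<lambda>_. 0), unitv j, j)" using ne by auto
      show "\<And>Ja. brb n ((\<lambda>_. 0), unitv j, j) Ja (g, d, j) - brb n ((\<lambda>_. 0), (\<lambda>_. 0), j) Ja (g, (\<lambda>t. d t - unitv j t), j)
          = (if Ja = (g, d, j) then -1 else 0)" by (rule key1)
    qed
    then show False using nz J by simp
  qed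
  have jn: "n \<le> j"
  proof (rule ccontr)
    assume "\<not> n \<le> j"
    then have jn: "j < n" by simp
    have vb3: "valid_idx n m (unitv j, (\<lambda>_. 0), j)" using jl jn by (simp add: valid_idx_def unitv_def)
    have "l ((\<lambda>_. 0), unitv j, j) = 0"
    proof (rule vanish[OF W P vb1 vb3])
      show "((\<lambda>_. 0), unitv j, j) \<noteq> ((\<lambda>_. 0), (\<lambda>_. 0), j)" using unitv_ne0 by auto
      show "(unitv j, unitv j, j) \<noteq> (unitv j, (\<lambda>_. 0), j)" using unitv_ne0 by auto
      show "\<And>Ja. brb n (unitv j, (\<lambda>_. 0), j) Ja (unitv j, unitv j, j) - brb n ((\<lambda>_. 0), (\<lambda>_. 0), j) Ja ((\<lambda>_. 0), unitv j, j)
          = (if Ja = ((\<lambda>_. 0), unitv j, j) then -1 else 0)" by (rule key2[OF jn])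
    qed
    then show False using nz J gd by simp
  qed
  show ?thesis using J gd jn jl by (auto simp: xd_def)
qed

lemma brb_xd:
  assumes "n \<le> t"
  shows "brb n (a, b, k) (xd t) r = (if r = (a, b, k) then (if k = t then 1 else 0) - of_int (b t) else (0::'a::field_char_0))"
proof -
  have e2: "(\<lambda>ta. b ta + unitv t ta - unitv k ta) = b" if "k = t" using that by auto
  have e4: "(\<lambda>ta. b ta + unitv t ta - unitv t ta) = b" by auto
  have e1: "(\<lambda>ta. a ta + 0) = a" by auto
  show ?thesis using assms unfolding xd_def brb_def Let_def
    by (auto simp: e4 e1 unitv_def)
qed


lemma comb_xd:
  assumes "t0 \<in> {n..<n+m}"
  shows "(\<Sum>t\<in>{n..<n+m}. c t * wbasis (xd t) (xd t0)) = (c t0 :: 'a::field_char_0)"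
  using assms by (simp add: wbasis_def xd_inj if_distrib cong: if_cong)

lemma comb_not:
  assumes "r \<notin> xd ` {n..<n+m}"
  shows "(\<Sum>t\<in>{n..<n+m}. c t * wbasis (xd t) r) = (0 :: 'a::field_char_0)"
  using assms by (auto simp: wbasis_def intro!: sum.neutral)

theorem proposition1:
  fixes n m :: nat
  shows "{l \<in> (Wnm n m :: (widx \<Rightarrow> 'a::field_char_0) set).
            \<forall>b. valid_idx n m b \<longrightarrow> (\<exists>c::'a. wbr n (wbasis b) l = (\<lambda>r. c * wbasis b r))}
         = {l. \<exists>c :: nat \<Rightarrow> 'a. l = (\<lambda>r. \<Sum>t\<in>{n..<n+m}. c t * wbasis (xd t) r)}
       \<and> (\<forall>c :: nat \<Rightarrow> 'a. (\<lambda>r. \<Sum>t\<in>{n..<n+m}. c t * wbasis (xd t) r) = (\<lambda>_. 0)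
            \<longrightarrow> (\<forall>t\<in>{n..<n+m}. c t = 0))"
proof (intro conjI allI impI ballI)
  fix c :: "nat \<Rightarrow> 'a" and t
  assume "(\<lambda>r. \<Sum>t\<in>{n..<n+m}. c t * wbasis (xd t) r) = (\<lambda>_. 0)" and t: "t \<in> {n..<n+m}"
  then have "(\<Sum>s\<in>{n..<n+m}. c s * wbasis (xd s) (xd t)) = 0" by metis
  then show "c t = 0" using comb_xd[OF t, of c] by simp
next
  show "{l \<in> (Wnm n m :: (widx \<Rightarrow> 'a::field_char_0) set).
            \<forall>b. valid_idx n m b \<longrightarrow> (\<exists>c::'a. wbr n (wbasis b) l = (\<lambda>r. c * wbasis b r))}
         = {l. \<exists>c :: nat \<Rightarrow> 'a. l = (\<lambda>r. \<Sum>t\<in>{n..<n+m}. c t * wbasis (xd t) r)}"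
  proof (intro equalityI subsetI)
    fix l :: "widx \<Rightarrow> 'a"
    assume "l \<in> {l \<in> Wnm n m.
            \<forall>b. valid_idx n m b \<longrightarrow> (\<exists>c::'a. wbr n (wbasis b) l = (\<lambda>r. c * wbasis b r))}"
    then have W: "l \<in> Wnm n m" and P: "\<forall>b. valid_idx n m b \<longrightarrow> (\<exists>c::'a. wbr n (wbasis b) l = (\<lambda>r. c * wbasis b r))"
      by auto
    have "l = (\<lambda>r. \<Sum>t\<in>{n..<n+m}. l (xd t) * wbasis (xd t) r)"
    proof
      fix r
      show "l r = (\<Sum>t\<in>{n..<n+m}. l (xd t) * wbasis (xd t) r)"
      proof (cases "r \<in> xd ` {n..<n+m}")
        case True
        then obtain t0 where t0: "t0 \<in> {n..<n+m}" "r = xd t0" by blast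
        show ?thesis using comb_xd[OF t0(1), of "\<lambda>t. l (xd t)"] t0(2) by simp
      next
        case False
        have "l r = 0" using support[OF W P, of r] False by auto
        then show ?thesis using comb_not[OF False] by simp
      qed
    qed
    then show "l \<in> {l. \<exists>c :: nat \<Rightarrow> 'a. l = (\<lambda>r. \<Sum>t\<in>{n..<n+m}. c t * wbasis (xd t) r)}"
      by (intro CollectI exI[of _ "\<lambda>t. l (xd t)"])
  next
    fix l :: "widx \<Rightarrow> 'a"
    assume "l \<in> {l. \<exists>c :: nat \<Rightarrow> 'a. l = (\<lambda>r. \<Sum>t\<in>{n..<n+m}. c t * wbasis (xd t) r)}"
    then obtain c where l: "l = (\<lambda>r. \<Sum>t\<in>{n..<n+m}. c t * wbasis (xd t) r)" by blast
    have lx: "l (xd t) = c t" if "t \<in> {n..<n+m}" for t using comb_xd[OF that] l by simp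
    have sub: "{i. l i \<noteq> 0} \<subseteq> xd ` {n..<n+m}"
      using comb_not l by blast
    have fin: "finite (xd ` {n..<n+m})" by simp
    have W: "l \<in> Wnm n m"
      unfolding Wnm_def
    proof (intro CollectI conjI allI impI)
      show "finite {i. l i \<noteq> 0}" using finite_subset[OF sub fin] .
      fix i assume "l i \<noteq> 0"
      then obtain t where "t \<in> {n..<n+m}" "i = xd t" using sub by blast
      then show "valid_idx n m i" by (auto simp: valid_idx_def xd_def unitv_def)
    qed
    have "\<exists>d::'a. wbr n (wbasis b) l = (\<lambda>r. d * wbasis b r)" for b
    proof -
      obtain a bb k where b: "b = (a, bb, k)" by (cases b) auto
      have "wbr n (wbasis b) l r = (\<Sum>t\<in>{n..<n+m}. c t * ((if k = t then 1 else 0) - of_int (bb t))) * wbasis b r" for r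
      proof -
        have "wbr n (wbasis b) l r = (\<Sum>J\<in>{j. l j \<noteq> 0}. l J * brb n b J r)" by (rule wbr_basis)
        also have "\<dots> = (\<Sum>J\<in>xd ` {n..<n+m}. l J * brb n b J r)"
          by (rule sum.mono_neutral_left[OF fin sub]) auto
        also have "\<dots> = (\<Sum>t\<in>{n..<n+m}. l (xd t) * brb n b (xd t) r)"
          by (subst sum.reindex) (auto simp: inj_on_def xd_inj)
        also have "\<dots> = (\<Sum>t\<in>{n..<n+m}. c t * (if r = b then (if k = t then 1 else 0) - of_int (bb t) else 0))"
          by (rule sum.cong) (auto simp: lx b brb_xd)
        also have "\<dots> = (\<Sum>t\<in>{n..<n+m}. c t * ((if k = t then 1 else 0) - of_int (bb t))) * wbasis b r"
          by (simp add: wbasis_def sum_distrib_right)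
        finally show ?thesis .
      qed
      then show ?thesis by blast
    qed
    then show "l \<in> {l \<in> Wnm n m.
            \<forall>b. valid_idx n m b \<longrightarrow> (\<exists>c::'a. wbr n (wbasis b) l = (\<lambda>r. c * wbasis b r))}"
      using W by blast
  qed
qed

end
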